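(* There is a constant $\hat C=\hat C(\alpha,\beta)$ such that for every $0\le h\in L^1(\mathbb R^d)$ and $t>0$, $$t^{-1}\int_0^t\|\psi_\tau h\|_1\,d\tau\le\hat C\,\|\psi_th\|_1.$$
   Context: Let $d\ge3$, $1<\alpha<2$, $\kappa>0$. Let $\gamma(a)=\frac{2^a\pi^{d/2}\Gamma(a/2)}{\Gamma(\frac d2-\frac a2)}$ and let $\beta\in]0,\alpha[$ be defined by $\beta\frac{d+\beta-2}{d+\beta-\alpha}\frac{\gamma(d+\beta-2)}{\gamma(d+\beta-\alpha)}=\kappa$. Let $\eta(u)=u^\beta$ for $0<u<1$, $\eta(u)=\beta u(2-\frac u2)+1-\frac32\beta$ for $1\le u\le2$, $\eta(u)=1+\frac\beta2$ for $u\ge2$, and $\psi_s(x)=\eta(s^{-1/\alpha}|x|)$ for $s>0$. *)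

theory Defs
  imports "HOL-Analysis.Analysis"
begin

definition gamma_const :: "nat \<Rightarrow> real \<Rightarrow> real" where
  "gamma_const d a = 2 powr a * pi powr (real d / 2) * Gamma (a / 2) / Gamma (real d / 2 - a / 2)"

definition eta :: "real \<Rightarrow> real \<Rightarrow> real" where
  "eta \<beta> u = (if u < 1 then u powr \<beta>
               else if u \<le> 2 then \<beta> * u * (2 - u / 2) + 1 - 3 / 2 * \<beta>
               else 1 + \<beta> / 2)"

definition psi :: "real \<Rightarrow> real \<Rightarrow> real \<Rightarrow> 'a::real_normed_vector \<Rightarrow> real" where
  "psi \<alpha> \<beta> s x = eta \<beta> (s powr (-1 / \<alpha>) * norm x)"

definition L1norm :: "('a::euclidean_space \<Rightarrow> real) \<Rightarrow> real" where
  "L1norm f = (\<integral>x. \<bar>f x\<bar> \<partial>lborel)"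

end

theory Submission
  imports Defs
begin

lemma powr_int:
  fixes g t :: real
  assumes g: "0 < g" "g < 1" and t: "0 < t"
  shows "set_integrable lborel (einterval 0 (ereal t)) (\<lambda>x. x powr (-g))"
    "(LBINT x=0..ereal t. x powr (-g)) = t powr (1-g) / (1-g)"
proof -
  have D: "DERIV (\<lambda>x. x powr (1-g) / (1-g)) x :> x powr (-g)" if "0 < x" for x
  proof -
    have "((\<lambda>x. x powr (1-g) / (1-g)) has_real_derivative ((1-g) * x powr (1-g-1)) / (1-g)) (at x)"
      using that by (intro DERIV_cdivide has_real_derivative_powr) auto
    moreover have "((1-g) * x powr (1-g-1)) / (1-g) = x powr (-g)" using g by simp
    ultimately show ?thesis by simp
  qed
  have C: "isCont (\<lambda>x. x powr (-g)) x" if "0 < x" for x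
    using that by (auto intro!: continuous_intros)
  have A: "((\<lambda>x. x powr (1-g) / (1-g)) \<longlongrightarrow> 0) (at_right 0)"
  proof -
    have "((\<lambda>x. x powr (1-g)) \<longlongrightarrow> 0) (at_right 0)"
      using g by (intro tendsto_zero_powrI[where b="1-g"]) (auto intro!: tendsto_intros eventually_at_rightI[of 0 1])
    then show ?thesis using tendsto_divide_zero by blast
  qed
  have B: "((\<lambda>x. x powr (1-g) / (1-g)) \<longlongrightarrow> t powr (1-g) / (1-g)) (at_left t)"
    using t g by (intro tendsto_intros) (auto intro!: tendsto_intros)
  have r: "set_integrable lborel (einterval (ereal 0) (ereal t)) (\<lambda>x. x powr (-g))"
    "(LBINT x=ereal 0..ereal t. x powr (-g)) = t powr (1-g) / (1-g) - 0"
    by (rule interval_integral_FTC_nonneg[where F="\<lambda>x. x powr (1-g) / (1-g)"];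
        use t A B D C in \<open>auto simp: ereal_tendsto_simps1\<close>)+
  then show "set_integrable lborel (einterval 0 (ereal t)) (\<lambda>x. x powr (-g))"
    "(LBINT x=0..ereal t. x powr (-g)) = t powr (1-g) / (1-g)"
    by (simp_all add: zero_ereal_def)
qed

lemma eta_nonneg: "0 < b \<Longrightarrow> 0 \<le> v \<Longrightarrow> 0 \<le> eta b v"
proof -
  assume b: "0 < b" and v: "0 \<le> v"
  have "1 \<le> v \<Longrightarrow> v \<le> 2 \<Longrightarrow> 0 \<le> b * v * (2 - v / 2) + 1 - 3 / 2 * b"
  proof -
    assume "1 \<le> v" "v \<le> 2"
    then have "0 \<le> (b/2) * ((v-1)*(3-v))" using b by simp
    moreover have "b * v * (2 - v / 2) + 1 - 3 / 2 * b - 1 = (b/2) * ((v-1)*(3-v))"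
      by (simp add: algebra_simps)
    ultimately show ?thesis by linarith
  qed
  then show ?thesis using b v unfolding eta_def by auto
qed

lemma eta_le_M: assumes "0 < b" "0 \<le> v" shows "eta b v \<le> 1 + b/2"
proof -
  have "b * v * (2 - v / 2) + 1 - 3 / 2 * b \<le> 1 + b/2"
  proof -
    have "b * v * (2 - v / 2) + 1 - 3 / 2 * b - (1 + b/2) = - (b/2) * (v-2)^2"
      by (simp add: algebra_simps power2_eq_square)
    moreover have "- (b/2) * (v-2)^2 \<le> 0" using assms by simp
    ultimately show ?thesis by linarith
  qed
  moreover have "v < 1 \<Longrightarrow> v powr b \<le> 1"
    using assms by (simp add: powr_le1)
  ultimately show ?thesis using assms unfolding eta_def by auto
qed

lemma eta_ge1: assumes "0 < b" "1 \<le> v" shows "1 \<le> eta b v"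
proof -
  have "v \<le> 2 \<Longrightarrow> 1 \<le> b * v * (2 - v / 2) + 1 - 3 / 2 * b"
  proof -
    assume v2: "v \<le> 2"
    have "b * v * (2 - v / 2) + 1 - 3 / 2 * b - 1 = (b/2) * ((v-1)*(3-v))"
      by (simp add: algebra_simps)
    moreover have "0 \<le> (b/2) * ((v-1)*(3-v))" using assms v2 by simp
    ultimately show ?thesis by linarith
  qed
  then show ?thesis using assms unfolding eta_def by auto
qed

lemma eta_le_powr: assumes "0 < b" "0 \<le> v" shows "eta b v \<le> (1 + b/2) * v powr b"
proof (cases "v < 1")
  case True
  then have "eta b v = v powr b" unfolding eta_def by simp
  moreover have "0 \<le> v powr b" by simp
  ultimately show ?thesis using assms by (simp add: algebra_simps)
next
  case False
  then have "1 \<le> v powr b" using assms by (simp add: ge_one_powr_ge_zero)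
  then have "1 + b/2 \<le> (1 + b/2) * v powr b" using assms by simp
  then show ?thesis using eta_le_M[OF assms] by linarith
qed

lemma eta_scale: assumes "0 < b" "0 \<le> v" "1 \<le> l"
  shows "eta b (l * v) \<le> (1 + b/2) * l powr b * eta b v"
proof (cases "v < 1")
  case True
  then have "eta b v = v powr b" unfolding eta_def by simp
  moreover have "eta b (l * v) \<le> (1 + b/2) * (l * v) powr b"
    using assms by (intro eta_le_powr) auto
  ultimately show ?thesis using assms by (simp add: powr_mult)
next
  case False
  then have e1: "1 \<le> eta b v" using assms eta_ge1 by simp
  have l1: "1 \<le> l powr b" using assms by (simp add: ge_one_powr_ge_zero)
  have "1*1 \<le> l powr b * eta b v" by (rule mult_mono) (use e1 l1 in auto)
  have "eta b (l * v) \<le> 1 + b/2" using assms by (intro eta_le_M) auto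
  also have "\<dots> \<le> (1 + b/2) * (l powr b * eta b v)"
    using assms \<open>1*1 \<le> l powr b * eta b v\<close> by simp
  finally show ?thesis by (simp add: mult.assoc)
qed

lemma eta_measurable [measurable]: "eta b \<in> borel_measurable borel"
  unfolding eta_def by measurable

lemma psi_scale:
  fixes x :: "'a::real_normed_vector"
  assumes "0 < b" "0 < a" "0 < tau" "tau \<le> t"
  shows "psi a b tau x \<le> (1 + b/2) * (t/tau) powr (b/a) * psi a b t x"
proof -
  let ?l = "(t/tau) powr (1/a)"
  have l1: "1 \<le> ?l" using assms by (simp add: ge_one_powr_ge_zero)
  have eq: "tau powr (-1/a) * norm x = ?l * (t powr (-1/a) * norm x)"
    using assms by (simp add: powr_divide powr_minus_divide field_simps)
  have "psi a b tau x = eta b (?l * (t powr (-1/a) * norm x))"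
    unfolding psi_def eq ..
  also have "\<dots> \<le> (1 + b/2) * ?l powr b * eta b (t powr (-1/a) * norm x)"
    using assms l1 by (intro eta_scale) auto
  also have "?l powr b = (t/tau) powr (b/a)" by (simp add: powr_powr)
  finally show ?thesis unfolding psi_def by simp
qed

theorem lemma4:
  fixes \<alpha> \<beta> \<kappa> :: real
  assumes "CARD('d::finite) \<ge> 3"
    and "1 < \<alpha>" and "\<alpha> < 2" and "\<kappa> > 0"
    and "0 < \<beta>" and "\<beta> < \<alpha>"
    and "\<beta> * ((real CARD('d) + \<beta> - 2) / (real CARD('d) + \<beta> - \<alpha>))
           * (gamma_const CARD('d) (real CARD('d) + \<beta> - 2)
              / gamma_const CARD('d) (real CARD('d) + \<beta> - \<alpha>)) = \<kappa>"
  shows "\<exists>C::real. \<forall>(h :: real^'d \<Rightarrow> real) t.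
           integrable lborel h \<longrightarrow> (\<forall>x. 0 \<le> h x) \<longrightarrow> 0 < t \<longrightarrow>
           (1 / t) * (LBINT \<tau>=0..t. L1norm (\<lambda>x. psi \<alpha> \<beta> \<tau> x * h x))
             \<le> C * L1norm (\<lambda>x. psi \<alpha> \<beta> t x * h x)"
proof -
  define g where "g = \<beta> / \<alpha>"
  define M where "M = 1 + \<beta> / 2"
  have a0: "0 < \<alpha>" and b0: "0 < \<beta>" using assms by auto
  have g0: "0 < g" "g < 1" unfolding g_def using assms by auto
  have M0: "0 < M" unfolding M_def using b0 by simp
  have psi_nn: "0 \<le> psi \<alpha> \<beta> s x" for s and x :: "real^'d"
    unfolding psi_def by (rule eta_nonneg[OF b0]) simp
  have psi_le: "psi \<alpha> \<beta> s x \<le> M" for s and x :: "real^'d"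
    unfolding psi_def M_def by (rule eta_le_M[OF b0]) simp
  show ?thesis
  proof (intro exI[of _ "M / (1 - g)"] allI impI)
    fix h :: "real^'d \<Rightarrow> real" and t :: real
    assume hi: "integrable lborel h" and hn: "\<forall>x. 0 \<le> h x" and t0: "0 < t"
    have hm: "h \<in> borel_measurable lborel" using hi by (rule borel_measurable_integrable)
    have meas: "(\<lambda>x. psi \<alpha> \<beta> s x * h x) \<in> borel_measurable lborel" for s
      unfolding psi_def using hm by measurable
    have intg: "integrable lborel (\<lambda>x. psi \<alpha> \<beta> s x * h x)" for s
    proof (rule Bochner_Integration.integrable_bound[OF integrable_mult_right[OF hi, of M] meas])
      show "AE x in lborel. norm (psi \<alpha> \<beta> s x * h x) \<le> norm (M * h x)"
        using psi_nn psi_le hn M0 by (auto simp: abs_mult intro!: mult_right_mono)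
    qed
    define L where "L = L1norm (\<lambda>x. psi \<alpha> \<beta> t x * h x)"
    have L0: "0 \<le> L" unfolding L_def L1norm_def by simp
    have bnd: "L1norm (\<lambda>x. psi \<alpha> \<beta> s x * h x) \<le> M * t powr g * L * s powr (-g)"
      if s: "0 < s" "s \<le> t" for s
    proof -
      have "L1norm (\<lambda>x. psi \<alpha> \<beta> s x * h x) \<le> (\<integral>x. M * (t/s) powr g * \<bar>psi \<alpha> \<beta> t x * h x\<bar> \<partial>lborel)"
        unfolding L1norm_def
      proof (rule integral_mono')
        show "integrable lborel (\<lambda>x. M * (t/s) powr g * \<bar>psi \<alpha> \<beta> t x * h x\<bar>)"
          by (intro integrable_mult_right integrable_abs intg)
        show "\<bar>psi \<alpha> \<beta> s x * h x\<bar> \<le> M * (t/s) powr g * \<bar>psi \<alpha> \<beta> t x * h x\<bar>" for x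
        proof -
          have "psi \<alpha> \<beta> s x \<le> M * (t/s) powr g * psi \<alpha> \<beta> t x"
            unfolding M_def g_def by (rule psi_scale) (use a0 b0 s in auto)
          then have "psi \<alpha> \<beta> s x * h x \<le> M * (t/s) powr g * psi \<alpha> \<beta> t x * h x"
            using hn by (intro mult_right_mono) auto
          then show ?thesis using psi_nn hn by (simp add: abs_mult mult.assoc)
        qed
        show "0 \<le> M * (t/s) powr g * \<bar>psi \<alpha> \<beta> t x * h x\<bar>" for x using M0 by simp
      qed
      also have "\<dots> = M * (t/s) powr g * L" unfolding L_def L1norm_def by simp
      also have "(t/s) powr g = t powr g * s powr (-g)"
        using s t0 by (simp add: powr_divide powr_minus_divide)
      finally show ?thesis by (simp add: mult_ac)
    qed
    let ?A = "einterval 0 (ereal t)"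
    have memA: "x \<in> ?A \<longleftrightarrow> 0 < x \<and> x < t" for x
      by (simp add: einterval_iff zero_ereal_def)
    note PI = powr_int[OF g0 t0]
    have si: "set_integrable lborel ?A (\<lambda>x. (M * t powr g * L) * x powr (-g))"
      using integrable_mult_right[OF PI(1)[unfolded set_integrable_def], of "M * t powr g * L"]
      unfolding set_integrable_def by (simp add: mult_ac)
    have "(LBINT \<tau>=0..ereal t. L1norm (\<lambda>x. psi \<alpha> \<beta> \<tau> x * h x))
        = (\<integral>\<tau>. indicator ?A \<tau> *\<^sub>R L1norm (\<lambda>x. psi \<alpha> \<beta> \<tau> x * h x) \<partial>lborel)"
      using t0 by (simp add: interval_lebesgue_integral_def set_lebesgue_integral_def zero_ereal_def)
    also have "\<dots> \<le> (\<integral>\<tau>. indicator ?A \<tau> *\<^sub>R ((M * t powr g * L) * \<tau> powr (-g)) \<partial>lborel)"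
    proof (rule integral_mono')
      show "integrable lborel (\<lambda>\<tau>. indicator ?A \<tau> *\<^sub>R ((M * t powr g * L) * \<tau> powr (-g)))"
        using si unfolding set_integrable_def .
      show "indicator ?A x *\<^sub>R L1norm (\<lambda>xa. psi \<alpha> \<beta> x xa * h xa)
         \<le> indicator ?A x *\<^sub>R ((M * t powr g * L) * x powr (-g))" for x
        using bnd[of x] by (cases "x \<in> ?A") (auto simp: memA)
      show "0 \<le> indicator ?A x *\<^sub>R ((M * t powr g * L) * x powr (-g))" for x
        using M0 L0 by simp
    qed
    also have "\<dots> = (M * t powr g * L) * (LBINT \<tau>=0..ereal t. \<tau> powr (-g))"
      using t0 by (simp add: interval_lebesgue_integral_def set_lebesgue_integral_def zero_ereal_def
          flip: integral_mult_right_zero) (simp add: mult_ac)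
    also have "\<dots> = (M * t powr g * L) * (t powr (1-g) / (1-g))" using PI(2) by simp
    also have "\<dots> = M * L * t / (1-g)"
    proof -
      have "t powr g * t powr (1-g) = t" using t0 by (simp add: powr_add[symmetric])
      then show ?thesis by (simp add: field_simps)
    qed
    finally have "(LBINT \<tau>=0..ereal t. L1norm (\<lambda>x. psi \<alpha> \<beta> \<tau> x * h x)) \<le> M * L * t / (1-g)" .
    then have "(1/t) * (LBINT \<tau>=0..ereal t. L1norm (\<lambda>x. psi \<alpha> \<beta> \<tau> x * h x)) \<le> (1/t) * (M * L * t / (1-g))"
      using t0 by (intro mult_left_mono) auto
    also have "\<dots> = M / (1 - g) * L" using t0 by simp
    finally show "(1/t) * (LBINT \<tau>=0..t. L1norm (\<lambda>x. psi \<alpha> \<beta> \<tau> x * h x))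
             \<le> M / (1 - g) * L1norm (\<lambda>x. psi \<alpha> \<beta> t x * h x)"
      unfolding L_def .
  qed
qed
end
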